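(* In the setting described in the context, suppose $\mathrm{ev}$ is multiplicative and the functor $\mathcal{U}$ is strong symmetric monoidal (property (M)). Then: (1) for all objects $W,W'$ the composition map $\circ\colon\operatorname{Hom}_{\mathcal{P}^1}(\emptyset,W')\otimes\operatorname{Hom}_{\mathcal{P}^1}(W,\emptyset)\to\operatorname{Hom}_{\mathcal{P}^1}(W,W')$ is surjective (property (M')), $I_1(W,W')=I_2(W,W')$, and hence the quotient functor $\mathcal{P}^1\to\mathcal{P}^2$ is an isomorphism of $\Bbbk$-linear categories; (2) the ideal $I:=I_1=I_2$ is monoidal, i.e. $\Sigma\sqcup\Theta\in I(V\sqcup W,V'\sqcup W')$ whenever $\Sigma\in I(V,V')$ and $\Theta\in\operatorname{Hom}_{\mathcal{P}}(W,W')$, so the symmetric monoidal structure of $\mathcal{P}$ descends to $\mathcal{P}^1$, and the functor $\operatorname{Hom}_{\mathcal{P}^1}(\emptyset,-)\colon\mathcal{P}^1\to\Bbbk\text{-mod}$ is strong symmetric monoidal.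
   Context: Setting. Let $\Bbbk$ be a commutative ring. Let $\mathcal{P}$ be a small $\Bbbk$-linear (strict) symmetric monoidal category with monoidal product $\sqcup$ and unit object $\emptyset$, in which every object $W$ has a chosen dual $W^r$, giving the standard identifications $\operatorname{Hom}(W_1,W_2)\cong\operatorname{Hom}(\emptyset,W_2\sqcup W_1^r)\cong\operatorname{Hom}(W_1\sqcup W_2^r,\emptyset)\cong\operatorname{Hom}(W_2^r,W_1^r)$. (In the paper $\mathcal{P}$ is the category of closed $\mathcal{C}$-labeled webs and prefoams.) Let $\mathrm{tr}_W$ be the categorical trace and $\mathrm{ev}\colon\operatorname{End}_{\mathcal{P}}(\emptyset)\to\Bbbk$ a $\Bbbk$-linear map; it is multiplicative if $\mathrm{ev}(\mathrm{id}_\emptyset)=1$ and $\mathrm{ev}(\Sigma_1\sqcup\Sigma_2)=\mathrm{ev}(\Sigma_1)\mathrm{ev}(\Sigma_2)$. Define $I_1(W,W')\subseteq\operatorname{Hom}(W,W')$ as the set of $\Sigma$ with $\mathrm{ev}(\mathrm{tr}_W(\Sigma'\circ\Sigma))=0$ for all $\Sigma'\in\operatorname{Hom}(W',W)$, and $I_2(W,W')$ as the set of $\Sigma$ with $\mathrm{ev}(\Sigma''\circ\Sigma\circ\Sigma')=0$ for all $\Sigma'\in\operatorname{Hom}(\emptyset,W)$, $\Sigma''\in\operatorname{Hom}(W',\emptyset)$; these are ideals with $I_1\subseteq I_2$. Let $\pi\colon\mathcal{P}\to\mathcal{P}^1:=\mathcal{P}/I_1$, $\mathcal{P}^2:=\mathcal{P}/I_2$,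 and $\mathcal{U}:=\operatorname{Hom}_{\mathcal{P}^1}(\emptyset,-)\circ\pi\colon\mathcal{P}\to\Bbbk\text{-mod}$, which (for multiplicative $\mathrm{ev}$) is lax symmetric monoidal via the maps $\mathcal{U}(W)\otimes\mathcal{U}(V)\to\mathcal{U}(W\sqcup V)$ induced by $\sqcup$; strong means these maps and the unit map $\Bbbk\to\mathcal{U}(\emptyset)$ are isomorphisms. *)

theory Defs
  imports Main
begin

text \<open>A small k-linear strict symmetric monoidal category with chosen (right) duals,
  presented with a single type of morphisms 'm and hom-sets Hom A B.
  Composition: c_comp g f is g after f.\<close>

record ('o, 'm, 'k) lsmcat =
  c_hom   :: "'o \<Rightarrow> 'o \<Rightarrow> 'm set"
  c_comp  :: "'m \<Rightarrow> 'm \<Rightarrow> 'm"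
  c_id    :: "'o \<Rightarrow> 'm"
  c_add   :: "'m \<Rightarrow> 'm \<Rightarrow> 'm"
  c_zero  :: "'o \<Rightarrow> 'o \<Rightarrow> 'm"
  c_smul  :: "'k \<Rightarrow> 'm \<Rightarrow> 'm"
  c_otens :: "'o \<Rightarrow> 'o \<Rightarrow> 'o"
  c_unit  :: "'o"
  c_mtens :: "'m \<Rightarrow> 'm \<Rightarrow> 'm"
  c_braid :: "'o \<Rightarrow> 'o \<Rightarrow> 'm"
  c_dual  :: "'o \<Rightarrow> 'o"
  c_coev  :: "'o \<Rightarrow> 'm"
  c_evl   :: "'o \<Rightarrow> 'm"

locale lin_sym_mon_cat_duals =
  fixes C :: "('o, 'm, 'k::comm_ring_1) lsmcat"
  assumes
    comp_closed: "\<And>A B D f g. f \<in> c_hom C A B \<Longrightarrow> g \<in> c_hom C B D \<Longrightarrow> c_comp C g f \<in> c_hom C A D"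
    and id_closed: "\<And>A. c_id C A \<in> c_hom C A A"
    and id_left: "\<And>A B f. f \<in> c_hom C A B \<Longrightarrow> c_comp C (c_id C B) f = f"
    and id_right: "\<And>A B f. f \<in> c_hom C A B \<Longrightarrow> c_comp C f (c_id C A) = f"
    and comp_assoc: "\<And>A B D E f g h. f \<in> c_hom C A B \<Longrightarrow> g \<in> c_hom C B D \<Longrightarrow> h \<in> c_hom C D E \<Longrightarrow>
         c_comp C h (c_comp C g f) = c_comp C (c_comp C h g) f"
    and zero_closed: "\<And>A B. c_zero C A B \<in> c_hom C A B"
    and add_closed: "\<And>A B f g. f \<in> c_hom C A B \<Longrightarrow> g \<in> c_hom C A B \<Longrightarrow> c_add C f g \<in> c_hom C A B"
    and smul_closed: "\<And>A B a f. f \<in> c_hom C A B \<Longrightarrow> c_smul C a f \<in> c_hom C A B"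
    and add_assoc: "\<And>A B f g h. f \<in> c_hom C A B \<Longrightarrow> g \<in> c_hom C A B \<Longrightarrow> h \<in> c_hom C A B \<Longrightarrow>
         c_add C (c_add C f g) h = c_add C f (c_add C g h)"
    and add_comm: "\<And>A B f g. f \<in> c_hom C A B \<Longrightarrow> g \<in> c_hom C A B \<Longrightarrow> c_add C f g = c_add C g f"
    and add_zero: "\<And>A B f. f \<in> c_hom C A B \<Longrightarrow> c_add C f (c_zero C A B) = f"
    and add_neg: "\<And>A B f. f \<in> c_hom C A B \<Longrightarrow> c_add C f (c_smul C (-1) f) = c_zero C A B"
    and smul_one: "\<And>A B f. f \<in> c_hom C A B \<Longrightarrow> c_smul C 1 f = f"
    and smul_smul: "\<And>A B a b f. f \<in> c_hom C A B \<Longrightarrow> c_smul C (a * b) f = c_smul C a (c_smul C b f)"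
    and smul_add_left: "\<And>A B a b f. f \<in> c_hom C A B \<Longrightarrow> c_smul C (a + b) f = c_add C (c_smul C a f) (c_smul C b f)"
    and smul_add_right: "\<And>A B a f g. f \<in> c_hom C A B \<Longrightarrow> g \<in> c_hom C A B \<Longrightarrow>
         c_smul C a (c_add C f g) = c_add C (c_smul C a f) (c_smul C a g)"
    and comp_add_left: "\<And>A B D f g g'. f \<in> c_hom C A B \<Longrightarrow> g \<in> c_hom C B D \<Longrightarrow> g' \<in> c_hom C B D \<Longrightarrow>
         c_comp C (c_add C g g') f = c_add C (c_comp C g f) (c_comp C g' f)"
    and comp_add_right: "\<And>A B D f f' g. f \<in> c_hom C A B \<Longrightarrow> f' \<in> c_hom C A B \<Longrightarrow> g \<in> c_hom C B D \<Longrightarrow>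
         c_comp C g (c_add C f f') = c_add C (c_comp C g f) (c_comp C g f')"
    and comp_smul_left: "\<And>A B D a f g. f \<in> c_hom C A B \<Longrightarrow> g \<in> c_hom C B D \<Longrightarrow>
         c_comp C (c_smul C a g) f = c_smul C a (c_comp C g f)"
    and comp_smul_right: "\<And>A B D a f g. f \<in> c_hom C A B \<Longrightarrow> g \<in> c_hom C B D \<Longrightarrow>
         c_comp C g (c_smul C a f) = c_smul C a (c_comp C g f)"
    and otens_assoc: "\<And>A B D. c_otens C (c_otens C A B) D = c_otens C A (c_otens C B D)"
    and otens_unit_left: "\<And>A. c_otens C (c_unit C) A = A"
    and otens_unit_right: "\<And>A. c_otens C A (c_unit C) = A"
    and mtens_closed: "\<And>A B A' B' f g. f \<in> c_hom C A B \<Longrightarrow> g \<in> c_hom C A' B' \<Longrightarrow>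
         c_mtens C f g \<in> c_hom C (c_otens C A A') (c_otens C B B')"
    and mtens_assoc: "\<And>A B A' B' A'' B'' f g h. f \<in> c_hom C A B \<Longrightarrow> g \<in> c_hom C A' B' \<Longrightarrow> h \<in> c_hom C A'' B'' \<Longrightarrow>
         c_mtens C (c_mtens C f g) h = c_mtens C f (c_mtens C g h)"
    and mtens_unit_left: "\<And>A B f. f \<in> c_hom C A B \<Longrightarrow> c_mtens C (c_id C (c_unit C)) f = f"
    and mtens_unit_right: "\<And>A B f. f \<in> c_hom C A B \<Longrightarrow> c_mtens C f (c_id C (c_unit C)) = f"
    and mtens_id: "\<And>A B. c_mtens C (c_id C A) (c_id C B) = c_id C (c_otens C A B)"
    and interchange: "\<And>A B D A' B' D' f g f' g'. f \<in> c_hom C A B \<Longrightarrow> g \<in> c_hom C B D \<Longrightarrow>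
         f' \<in> c_hom C A' B' \<Longrightarrow> g' \<in> c_hom C B' D' \<Longrightarrow>
         c_mtens C (c_comp C g f) (c_comp C g' f') = c_comp C (c_mtens C g g') (c_mtens C f f')"
    and mtens_add_left: "\<And>A B A' B' f f' g. f \<in> c_hom C A B \<Longrightarrow> f' \<in> c_hom C A B \<Longrightarrow> g \<in> c_hom C A' B' \<Longrightarrow>
         c_mtens C (c_add C f f') g = c_add C (c_mtens C f g) (c_mtens C f' g)"
    and mtens_add_right: "\<And>A B A' B' f g g'. f \<in> c_hom C A B \<Longrightarrow> g \<in> c_hom C A' B' \<Longrightarrow> g' \<in> c_hom C A' B' \<Longrightarrow>
         c_mtens C f (c_add C g g') = c_add C (c_mtens C f g) (c_mtens C f g')"
    and mtens_smul_left: "\<And>A B A' B' a f g. f \<in> c_hom C A B \<Longrightarrow> g \<in> c_hom C A' B' \<Longrightarrow>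
         c_mtens C (c_smul C a f) g = c_smul C a (c_mtens C f g)"
    and mtens_smul_right: "\<And>A B A' B' a f g. f \<in> c_hom C A B \<Longrightarrow> g \<in> c_hom C A' B' \<Longrightarrow>
         c_mtens C f (c_smul C a g) = c_smul C a (c_mtens C f g)"
    and braid_closed: "\<And>A B. c_braid C A B \<in> c_hom C (c_otens C A B) (c_otens C B A)"
    and braid_natural: "\<And>A B A' B' f g. f \<in> c_hom C A B \<Longrightarrow> g \<in> c_hom C A' B' \<Longrightarrow>
         c_comp C (c_braid C B B') (c_mtens C f g) = c_comp C (c_mtens C g f) (c_braid C A A')"
    and braid_sym: "\<And>A B. c_comp C (c_braid C B A) (c_braid C A B) = c_id C (c_otens C A B)"
    and braid_hexagon1: "\<And>A B D. c_braid C A (c_otens C B D) =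
         c_comp C (c_mtens C (c_id C B) (c_braid C A D)) (c_mtens C (c_braid C A B) (c_id C D))"
    and braid_hexagon2: "\<And>A B D. c_braid C (c_otens C A B) D =
         c_comp C (c_mtens C (c_braid C A D) (c_id C B)) (c_mtens C (c_id C A) (c_braid C B D))"
    and coev_closed: "\<And>A. c_coev C A \<in> c_hom C (c_unit C) (c_otens C A (c_dual C A))"
    and evl_closed: "\<And>A. c_evl C A \<in> c_hom C (c_otens C (c_dual C A) A) (c_unit C)"
    and zigzag1: "\<And>A. c_comp C (c_mtens C (c_id C A) (c_evl C A)) (c_mtens C (c_coev C A) (c_id C A)) = c_id C A"
    and zigzag2: "\<And>A. c_comp C (c_mtens C (c_evl C A) (c_id C (c_dual C A)))
                         (c_mtens C (c_id C (c_dual C A)) (c_coev C A)) = c_id C (c_dual C A)"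

definition ctrace :: "('o, 'm, 'k) lsmcat \<Rightarrow> 'o \<Rightarrow> 'm \<Rightarrow> 'm" where
  "ctrace C W f = c_comp C (c_evl C W) (c_comp C (c_braid C W (c_dual C W))
       (c_comp C (c_mtens C f (c_id C (c_dual C W))) (c_coev C W)))"

definition ev_linear :: "('o, 'm, 'k::comm_ring_1) lsmcat \<Rightarrow> ('m \<Rightarrow> 'k) \<Rightarrow> bool" where
  "ev_linear C ev \<longleftrightarrow>
     (\<forall>a \<in> c_hom C (c_unit C) (c_unit C). \<forall>b \<in> c_hom C (c_unit C) (c_unit C).
        ev (c_add C a b) = ev a + ev b) \<and>
     (\<forall>a \<in> c_hom C (c_unit C) (c_unit C). \<forall>c. ev (c_smul C c a) = c * ev a)"

definition ev_multiplicative :: "('o, 'm, 'k::comm_ring_1) lsmcat \<Rightarrow> ('m \<Rightarrow> 'k) \<Rightarrow> bool" where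
  "ev_multiplicative C ev \<longleftrightarrow>
     ev (c_id C (c_unit C)) = 1 \<and>
     (\<forall>a \<in> c_hom C (c_unit C) (c_unit C). \<forall>b \<in> c_hom C (c_unit C) (c_unit C).
        ev (c_mtens C a b) = ev a * ev b)"

definition I1 :: "('o, 'm, 'k::comm_ring_1) lsmcat \<Rightarrow> ('m \<Rightarrow> 'k) \<Rightarrow> 'o \<Rightarrow> 'o \<Rightarrow> 'm set" where
  "I1 C ev W W' = {S \<in> c_hom C W W'. \<forall>S' \<in> c_hom C W' W. ev (ctrace C W (c_comp C S' S)) = 0}"

definition I2 :: "('o, 'm, 'k::comm_ring_1) lsmcat \<Rightarrow> ('m \<Rightarrow> 'k) \<Rightarrow> 'o \<Rightarrow> 'o \<Rightarrow> 'm set" where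
  "I2 C ev W W' = {S \<in> c_hom C W W'. \<forall>S' \<in> c_hom C (c_unit C) W. \<forall>S'' \<in> c_hom C W' (c_unit C).
       ev (c_comp C S'' (c_comp C S S')) = 0}"

definition mdiff :: "('o, 'm, 'k::comm_ring_1) lsmcat \<Rightarrow> 'm \<Rightarrow> 'm \<Rightarrow> 'm" where
  "mdiff C f g = c_add C f (c_smul C (-1) g)"

definition msum :: "('o, 'm, 'k) lsmcat \<Rightarrow> 'o \<Rightarrow> 'o \<Rightarrow> 'm list \<Rightarrow> 'm" where
  "msum C A B fs = foldr (c_add C) fs (c_zero C A B)"

text \<open>The class of x in U(W) = Hom_{P^1}(empty, W) = Hom(empty,W) / I1(empty,W).\<close>
definition ucls :: "('o, 'm, 'k::comm_ring_1) lsmcat \<Rightarrow> ('m \<Rightarrow> 'k) \<Rightarrow> 'o \<Rightarrow> 'm \<Rightarrow> 'm set" where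
  "ucls C ev W x = {x' \<in> c_hom C (c_unit C) W. mdiff C x' x \<in> I1 C ev (c_unit C) W}"

text \<open>Tensor product U(W) (x)_k U(V): free k-module on pairs of classes (finitely supported
  functions) modulo the submodule spanned by the bilinearity relations.\<close>
inductive_set kspan :: "('p \<Rightarrow> 'k::comm_ring_1) set \<Rightarrow> ('p \<Rightarrow> 'k) set" for G where
  kspan_zero: "(\<lambda>_. 0) \<in> kspan G"
| kspan_gen: "g \<in> G \<Longrightarrow> g \<in> kspan G"
| kspan_add: "f \<in> kspan G \<Longrightarrow> g \<in> kspan G \<Longrightarrow> (\<lambda>p. f p + g p) \<in> kspan G"
| kspan_smul: "f \<in> kspan G \<Longrightarrow> (\<lambda>p. c * f p) \<in> kspan G"

definition fdelta :: "'p \<Rightarrow> ('p \<Rightarrow> 'k::comm_ring_1)" where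
  "fdelta p = (\<lambda>q. if q = p then 1 else 0)"

definition tens_rels :: "('o, 'm, 'k::comm_ring_1) lsmcat \<Rightarrow> ('m \<Rightarrow> 'k) \<Rightarrow> 'o \<Rightarrow> 'o \<Rightarrow>
    (('m set \<times> 'm set) \<Rightarrow> 'k) set" where
  "tens_rels C ev W V =
     {(\<lambda>q. fdelta (ucls C ev W (c_add C x x'), ucls C ev V y) q - fdelta (ucls C ev W x, ucls C ev V y) q
            - fdelta (ucls C ev W x', ucls C ev V y) q) | x x' y.
        x \<in> c_hom C (c_unit C) W \<and> x' \<in> c_hom C (c_unit C) W \<and> y \<in> c_hom C (c_unit C) V}
   \<union> {(\<lambda>q. fdelta (ucls C ev W x, ucls C ev V (c_add C y y')) q - fdelta (ucls C ev W x, ucls C ev V y) q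
            - fdelta (ucls C ev W x, ucls C ev V y') q) | x y y'.
        x \<in> c_hom C (c_unit C) W \<and> y \<in> c_hom C (c_unit C) V \<and> y' \<in> c_hom C (c_unit C) V}
   \<union> {(\<lambda>q. fdelta (ucls C ev W (c_smul C c x), ucls C ev V y) q - c * fdelta (ucls C ev W x, ucls C ev V y) q) | c x y.
        x \<in> c_hom C (c_unit C) W \<and> y \<in> c_hom C (c_unit C) V}
   \<union> {(\<lambda>q. fdelta (ucls C ev W x, ucls C ev V (c_smul C c y)) q - c * fdelta (ucls C ev W x, ucls C ev V y) q) | c x y.
        x \<in> c_hom C (c_unit C) W \<and> y \<in> c_hom C (c_unit C) V}"

definition formal_tens :: "('o, 'm, 'k::comm_ring_1) lsmcat \<Rightarrow> ('m \<Rightarrow> 'k) \<Rightarrow> 'o \<Rightarrow> 'o \<Rightarrow>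
    ('k \<times> 'm \<times> 'm) list \<Rightarrow> (('m set \<times> 'm set) \<Rightarrow> 'k)" where
  "formal_tens C ev W V l =
     (\<lambda>q. sum_list (map (\<lambda>(c, x, y). c * fdelta (ucls C ev W x, ucls C ev V y) q) l))"

text \<open>Property (M): the lax structure maps U(W) (x) U(V) -> U(W V), [x](x)[y] |-> [x y],
  and k -> U(empty), c |-> [c id], are isomorphisms (surjective and injective).\<close>
definition U_strong :: "('o, 'm, 'k::comm_ring_1) lsmcat \<Rightarrow> ('m \<Rightarrow> 'k) \<Rightarrow> bool" where
  "U_strong C ev \<longleftrightarrow>
     (\<forall>W V.
        (\<forall>z \<in> c_hom C (c_unit C) (c_otens C W V). \<exists>l.
           set l \<subseteq> {(c, x, y). x \<in> c_hom C (c_unit C) W \<and> y \<in> c_hom C (c_unit C) V} \<and>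
           mdiff C z (msum C (c_unit C) (c_otens C W V) (map (\<lambda>(c, x, y). c_smul C c (c_mtens C x y)) l))
             \<in> I1 C ev (c_unit C) (c_otens C W V)) \<and>
        (\<forall>l. set l \<subseteq> {(c, x, y). x \<in> c_hom C (c_unit C) W \<and> y \<in> c_hom C (c_unit C) V} \<longrightarrow>
           msum C (c_unit C) (c_otens C W V) (map (\<lambda>(c, x, y). c_smul C c (c_mtens C x y)) l)
             \<in> I1 C ev (c_unit C) (c_otens C W V) \<longrightarrow>
           formal_tens C ev W V l \<in> kspan (tens_rels C ev W V))) \<and>
     (\<forall>z \<in> c_hom C (c_unit C) (c_unit C). \<exists>c.
        mdiff C z (c_smul C c (c_id C (c_unit C))) \<in> I1 C ev (c_unit C) (c_unit C)) \<and>
     (\<forall>c. c_smul C c (c_id C (c_unit C)) \<in> I1 C ev (c_unit C) (c_unit C) \<longrightarrow> c = 0)"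

end

theory Submission imports Defs begin
context lin_sym_mon_cat_duals begin
abbreviation "hom \<equiv> c_hom C"
abbreviation "cp \<equiv> c_comp C"
abbreviation "tn \<equiv> c_mtens C"
abbreviation "ot \<equiv> c_otens C"
abbreviation "idm \<equiv> c_id C"
abbreviation "uo \<equiv> c_unit C"
abbreviation "ad \<equiv> c_add C"
abbreviation "sm \<equiv> c_smul C"
abbreviation "zr \<equiv> c_zero C"

declare otens_unit_left[simp] otens_unit_right[simp]

lemma slide1:
  assumes "f \<in> hom A B" "g \<in> hom A' B'"
  shows "tn f g = cp (tn f (idm B')) (tn (idm A) g)"
proof -
  have "tn (cp f (idm A)) (cp (idm B') g) = cp (tn f (idm B')) (tn (idm A) g)"
    by (rule interchange[OF id_closed assms(1) assms(2) id_closed])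
  then show ?thesis using assms id_left id_right by metis
qed

lemma slide2:
  assumes "f \<in> hom A B" "g \<in> hom A' B'"
  shows "tn f g = cp (tn (idm B) g) (tn f (idm A'))"
proof -
  have "tn (cp (idm B) f) (cp g (idm A')) = cp (tn (idm B) g) (tn f (idm A'))"
    by (rule interchange[OF assms(1) id_closed id_closed assms(2)])
  then show ?thesis using assms id_left id_right by metis
qed

lemma tn_comp_id:
  assumes "f \<in> hom A B" "g \<in> hom B D"
  shows "tn (cp g f) (idm X) = cp (tn g (idm X)) (tn f (idm X))"
  using interchange[OF assms id_closed id_closed] id_left[OF id_closed] by metis

lemma braid_unit_left: "c_braid C uo D = idm D"
proof -
  let ?b = "c_braid C uo D" and ?b' = "c_braid C D uo"
  have b: "?b \<in> hom D D" using braid_closed[of uo D] by simp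
  have b': "?b' \<in> hom D D" using braid_closed[of D uo] by simp
  have "c_braid C (ot uo uo) D = cp (tn ?b (idm uo)) (tn (idm uo) ?b)"
    by (rule braid_hexagon2)
  then have idem: "?b = cp ?b ?b" using mtens_unit_left[OF b] mtens_unit_right[OF b] by simp
  have s1: "cp ?b ?b' = idm D" using braid_sym[of uo D] by simp
  have "?b = cp ?b (cp ?b ?b')" using s1 id_right[OF b] by simp
  also have "\<dots> = cp (cp ?b ?b) ?b'" using comp_assoc[OF b' b b] by simp
  also have "\<dots> = idm D" using idem s1 by simp
  finally show ?thesis .
qed

lemma evl_coev_unit: "cp (c_evl C uo) (c_coev C uo) = idm uo"
proof -
  have e: "c_evl C uo \<in> hom (c_dual C uo) uo" using evl_closed[of uo] by simp
  have c: "c_coev C uo \<in> hom uo (c_dual C uo)" using coev_closed[of uo] by simp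
  show ?thesis using zigzag1[of uo] mtens_unit_left[OF e] mtens_unit_right[OF c] by simp
qed

lemma scalar_slide:
  assumes q: "q \<in> hom uo uo" and f: "f \<in> hom A uo"
  shows "cp f (tn q (idm A)) = cp q f"
proof -
  have "tn q f = cp (tn (idm uo) f) (tn q (idm A))" by (rule slide2[OF q f])
  moreover have "tn q f = cp (tn q (idm uo)) (tn (idm uo) f)" by (rule slide1[OF q f])
  ultimately show ?thesis using mtens_unit_left[OF f] mtens_unit_right[OF q] by simp
qed

lemma TR0:
  assumes q: "q \<in> hom uo uo"
  shows "ctrace C uo q = q"
proof -
  let ?D = "c_dual C uo"
  have e: "c_evl C uo \<in> hom ?D uo" using evl_closed[of uo] by simp
  have c: "c_coev C uo \<in> hom uo ?D" using coev_closed[of uo] by simp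
  have t: "tn q (idm ?D) \<in> hom ?D ?D" using mtens_closed[OF q id_closed[of ?D]] by simp
  have tc: "cp (tn q (idm ?D)) (c_coev C uo) \<in> hom uo ?D" using comp_closed[OF c t] .
  have "ctrace C uo q = cp (c_evl C uo) (cp (tn q (idm ?D)) (c_coev C uo))"
    unfolding ctrace_def braid_unit_left using id_left[OF tc] by simp
  also have "\<dots> = cp (cp (c_evl C uo) (tn q (idm ?D))) (c_coev C uo)"
    using comp_assoc[OF c t e] .
  also have "\<dots> = cp (cp q (c_evl C uo)) (c_coev C uo)" using scalar_slide[OF q e] by simp
  also have "\<dots> = cp q (cp (c_evl C uo) (c_coev C uo))" using comp_assoc[OF c e q] by simp
  also have "\<dots> = q" using evl_coev_unit id_right[OF q] by simp
  finally show ?thesis .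
qed

lemma TR1:
  assumes u: "u \<in> hom uo W" and v: "v \<in> hom W uo"
  shows "ctrace C W (cp u v) = cp v u"
proof -
  let ?D = "c_dual C W"
  let ?e = "c_evl C W" and ?c = "c_coev C W" and ?br = "c_braid C W ?D"
  have e: "?e \<in> hom (ot ?D W) uo" by (rule evl_closed)
  have c: "?c \<in> hom uo (ot W ?D)" by (rule coev_closed)
  have br: "?br \<in> hom (ot W ?D) (ot ?D W)" by (rule braid_closed)
  have uD: "tn u (idm ?D) \<in> hom ?D (ot W ?D)" using mtens_closed[OF u id_closed[of ?D]] by simp
  have vD: "tn v (idm ?D) \<in> hom (ot W ?D) ?D" using mtens_closed[OF v id_closed[of ?D]] by simp
  have Du: "tn (idm ?D) u \<in> hom ?D (ot ?D W)" using mtens_closed[OF id_closed[of ?D] u] by simp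
  have vDc: "cp (tn v (idm ?D)) ?c \<in> hom uo ?D" using comp_closed[OF c vD] .
  have s1: "tn (cp u v) (idm ?D) = cp (tn u (idm ?D)) (tn v (idm ?D))" by (rule tn_comp_id[OF v u])
  have s2: "cp ?br (tn u (idm ?D)) = tn (idm ?D) u"
    using braid_natural[OF u id_closed[of ?D]] braid_unit_left id_right[OF Du] by simp
  have s3: "cp (tn (idm ?D) u) (tn v (idm ?D)) = tn v (tn (idm ?D) u)"
    using slide2[OF v Du] mtens_unit_left[OF Du] by simp
  have "ctrace C W (cp u v) = cp ?e (cp ?br (cp (cp (tn u (idm ?D)) (tn v (idm ?D))) ?c))"
    unfolding ctrace_def s1 ..
  also have "\<dots> = cp ?e (cp ?br (cp (tn u (idm ?D)) (cp (tn v (idm ?D)) ?c)))"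
    using comp_assoc[OF c vD uD] by simp
  also have "\<dots> = cp ?e (cp (cp ?br (tn u (idm ?D))) (cp (tn v (idm ?D)) ?c))"
    using comp_assoc[OF vDc uD br] by simp
  also have "\<dots> = cp ?e (cp (tn (idm ?D) u) (cp (tn v (idm ?D)) ?c))" using s2 by simp
  also have "\<dots> = cp ?e (cp (cp (tn (idm ?D) u) (tn v (idm ?D))) ?c)"
    using comp_assoc[OF c vD Du] by simp
  also have "\<dots> = cp ?e (cp (tn v (tn (idm ?D) u)) ?c)" using s3 by simp
  finally have L: "ctrace C W (cp u v) = cp ?e (cp (tn v (tn (idm ?D) u)) ?c)" .
  have cW: "tn ?c (idm W) \<in> hom W (ot (ot W ?D) W)" using mtens_closed[OF c id_closed[of W]] by simp
  have We: "tn (idm W) ?e \<in> hom (ot (ot W ?D) W) W"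
    using mtens_closed[OF id_closed[of W] e] otens_assoc by simp
  have WDu: "tn (idm (ot W ?D)) u \<in> hom (ot W ?D) (ot (ot W ?D) W)"
    using mtens_closed[OF id_closed[of "ot W ?D"] u] by simp
  have vDW: "tn v (idm (ot ?D W)) \<in> hom (ot (ot W ?D) W) (ot ?D W)"
    using mtens_closed[OF v id_closed[of "ot ?D W"]] otens_assoc by simp
  have s4: "cp (tn ?c (idm W)) u = cp (tn (idm (ot W ?D)) u) ?c"
    using slide1[OF c u] slide2[OF c u] mtens_unit_left[OF u] mtens_unit_right[OF c] by simp
  have s5: "cp v (tn (idm W) ?e) = cp ?e (tn v (idm (ot ?D W)))"
    using slide1[OF v e] slide2[OF v e] mtens_unit_left[OF e] mtens_unit_right[OF v] by simp
  have s6: "cp (tn v (idm (ot ?D W))) (tn (idm (ot W ?D)) u) = tn v (tn (idm ?D) u)"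
  proof -
    have a: "tn v (idm (ot ?D W)) = tn (tn v (idm ?D)) (idm W)"
      using mtens_id[of ?D W] mtens_assoc[OF v id_closed[of ?D] id_closed[of W]] by simp
    have b: "idm (ot W ?D) = tn (idm W) (idm ?D)" using mtens_id[of W ?D] by simp
    have WD: "tn (idm W) (idm ?D) \<in> hom (ot W ?D) (ot W ?D)" using b id_closed by metis
    have "tn (cp (tn v (idm ?D)) (tn (idm W) (idm ?D))) (cp (idm W) u)
        = cp (tn (tn v (idm ?D)) (idm W)) (tn (tn (idm W) (idm ?D)) u)"
      by (rule interchange[OF WD vD u id_closed])
    moreover have "cp (tn v (idm ?D)) (tn (idm W) (idm ?D)) = tn v (idm ?D)"
      using id_right[OF vD] b by simp
    ultimately have "tn (tn v (idm ?D)) u = cp (tn (tn v (idm ?D)) (idm W)) (tn (tn (idm W) (idm ?D)) u)"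
      using id_left[OF u] by simp
    then show ?thesis using a b mtens_assoc[OF v id_closed[of ?D] u] by simp
  qed
  have idW: "idm W = cp (tn (idm W) ?e) (tn ?c (idm W))" using zigzag1[of W] by simp
  have "cp v u = cp v (cp (cp (tn (idm W) ?e) (tn ?c (idm W))) u)"
    using idW id_left[OF u] by simp
  also have "\<dots> = cp v (cp (tn (idm W) ?e) (cp (tn ?c (idm W)) u))"
    using comp_assoc[OF u cW We] by simp
  also have "\<dots> = cp (cp v (tn (idm W) ?e)) (cp (tn ?c (idm W)) u)"
    using comp_assoc[OF comp_closed[OF u cW] We v] by simp
  also have "\<dots> = cp (cp ?e (tn v (idm (ot ?D W)))) (cp (tn (idm (ot W ?D)) u) ?c)"
    using s4 s5 by simp
  also have "\<dots> = cp ?e (cp (tn v (idm (ot ?D W))) (cp (tn (idm (ot W ?D)) u) ?c))"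
    using comp_assoc[OF comp_closed[OF c WDu] vDW e] by simp
  also have "\<dots> = cp ?e (cp (cp (tn v (idm (ot ?D W))) (tn (idm (ot W ?D)) u)) ?c)"
    using comp_assoc[OF c WDu vDW] by simp
  also have "\<dots> = cp ?e (cp (tn v (tn (idm ?D) u)) ?c)" using s6 by simp
  finally show ?thesis using L by simp
qed

lemma C1:
  assumes h: "h \<in> hom W W" and x: "x \<in> hom uo W" and y: "y \<in> hom uo (c_dual C W)"
  shows "cp (cp (c_evl C W) (cp (c_braid C W (c_dual C W)) (tn h (idm (c_dual C W))))) (tn x y)
       = cp (cp (c_evl C W) (tn y (idm W))) (cp h x)"
proof -
  let ?D = "c_dual C W"
  let ?e = "c_evl C W" and ?br = "c_braid C W ?D"
  have e: "?e \<in> hom (ot ?D W) uo" by (rule evl_closed)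
  have br: "?br \<in> hom (ot W ?D) (ot ?D W)" by (rule braid_closed)
  have hD: "tn h (idm ?D) \<in> hom (ot W ?D) (ot W ?D)" using mtens_closed[OF h id_closed] .
  have xy: "tn x y \<in> hom uo (ot W ?D)" using mtens_closed[OF x y] by simp
  have hx: "cp h x \<in> hom uo W" using comp_closed[OF x h] .
  have yW: "tn y (idm W) \<in> hom W (ot ?D W)" using mtens_closed[OF y id_closed[of W]] by simp
  have yhx: "tn y (cp h x) \<in> hom uo (ot ?D W)" using mtens_closed[OF y hx] by simp
  have a1: "cp (tn h (idm ?D)) (tn x y) = tn (cp h x) y"
    using interchange[OF x h y id_closed] id_left[OF y] by simp
  have a2: "cp ?br (tn (cp h x) y) = tn y (cp h x)"
    using braid_natural[OF hx y] braid_unit_left[of uo] id_right[OF yhx] by simp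
  have a3: "tn y (cp h x) = cp (tn y (idm W)) (cp h x)"
    using slide1[OF y hx] mtens_unit_left[OF hx] by simp
  have "cp (cp ?e (cp ?br (tn h (idm ?D)))) (tn x y) = cp ?e (cp (cp ?br (tn h (idm ?D))) (tn x y))"
    using comp_assoc[OF xy comp_closed[OF hD br] e] by simp
  also have "\<dots> = cp ?e (cp ?br (cp (tn h (idm ?D)) (tn x y)))"
    using comp_assoc[OF xy hD br] by simp
  also have "\<dots> = cp ?e (cp (tn y (idm W)) (cp h x))" using a1 a2 a3 by simp
  also have "\<dots> = cp (cp ?e (tn y (idm W))) (cp h x)" using comp_assoc[OF hx yW e] .
  finally show ?thesis .
qed

lemma zero_unique:
  assumes x: "x \<in> hom A B" and xx: "ad x x = x"
  shows "x = zr A B"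
proof -
  have n: "sm (-1) x \<in> hom A B" using smul_closed[OF x] .
  have "zr A B = ad x (sm (-1) x)" using add_neg[OF x] by simp
  also have "\<dots> = ad (ad x x) (sm (-1) x)" using xx by simp
  also have "\<dots> = ad x (ad x (sm (-1) x))" using add_assoc[OF x x n] .
  also have "\<dots> = x" using add_neg[OF x] add_zero[OF x] by simp
  finally show ?thesis by simp
qed

lemma zz: "ad (zr A B) (zr A B) = zr A B" using add_zero[OF zero_closed] .

lemma comp_zero_left: assumes g: "g \<in> hom B D" shows "cp g (zr A B) = zr A D"
proof (rule zero_unique)
  show "cp g (zr A B) \<in> hom A D" using comp_closed[OF zero_closed g] .
  show "ad (cp g (zr A B)) (cp g (zr A B)) = cp g (zr A B)"
    using comp_add_right[OF zero_closed zero_closed g, of A] zz by simp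
qed

lemma comp_zero_right: assumes f: "f \<in> hom A B" shows "cp (zr B D) f = zr A D"
proof (rule zero_unique)
  show "cp (zr B D) f \<in> hom A D" using comp_closed[OF f zero_closed] .
  show "ad (cp (zr B D) f) (cp (zr B D) f) = cp (zr B D) f"
    using comp_add_left[OF f zero_closed zero_closed] zz by simp
qed

lemma msum_closed: "set fs \<subseteq> hom A B \<Longrightarrow> msum C A B fs \<in> hom A B"
  by (induction fs) (auto simp: msum_def zero_closed add_closed)

lemma msum_Cons: "msum C A B (f # fs) = ad f (msum C A B fs)"
  by (simp add: msum_def)

lemma comp_msum_left:
  assumes g: "g \<in> hom B D"
  shows "set fs \<subseteq> hom A B \<Longrightarrow> cp g (msum C A B fs) = msum C A D (map (cp g) fs)"
proof (induction fs)
  case Nil then show ?case using comp_zero_left[OF g] by (simp add: msum_def)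
next
  case (Cons f fs)
  then show ?case using comp_add_right[OF _ msum_closed g] by (simp add: msum_Cons)
qed

lemma trace_add:
  assumes f: "f \<in> hom W W" and g: "g \<in> hom W W"
  shows "ctrace C W (ad f g) = ad (ctrace C W f) (ctrace C W g)"
proof -
  let ?D = "c_dual C W"
  have fD: "tn f (idm ?D) \<in> hom (ot W ?D) (ot W ?D)" using mtens_closed[OF f id_closed] .
  have gD: "tn g (idm ?D) \<in> hom (ot W ?D) (ot W ?D)" using mtens_closed[OF g id_closed] .
  have c: "c_coev C W \<in> hom uo (ot W ?D)" by (rule coev_closed)
  show ?thesis unfolding ctrace_def
    using mtens_add_left[OF f g id_closed[of ?D]] comp_add_left[OF c fD gD]
      comp_add_right[OF comp_closed[OF c fD] comp_closed[OF c gD] braid_closed]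
      comp_add_right[OF comp_closed[OF comp_closed[OF c fD] braid_closed]
         comp_closed[OF comp_closed[OF c gD] braid_closed] evl_closed]
    by simp
qed

lemma trace_smul:
  assumes f: "f \<in> hom W W"
  shows "ctrace C W (sm a f) = sm a (ctrace C W f)"
proof -
  let ?D = "c_dual C W"
  have fD: "tn f (idm ?D) \<in> hom (ot W ?D) (ot W ?D)" using mtens_closed[OF f id_closed] .
  have c: "c_coev C W \<in> hom uo (ot W ?D)" by (rule coev_closed)
  show ?thesis unfolding ctrace_def
    using mtens_smul_left[OF f id_closed[of ?D]] comp_smul_left[OF c fD]
      comp_smul_right[OF comp_closed[OF c fD] braid_closed]
      comp_smul_right[OF comp_closed[OF comp_closed[OF c fD] braid_closed] evl_closed]
    by simp
qed

lemma trace_closed: "f \<in> hom W W \<Longrightarrow> ctrace C W f \<in> hom uo uo"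
  unfolding ctrace_def
  by (meson coev_closed comp_closed mtens_closed id_closed braid_closed evl_closed)

lemma trace_zero: "ctrace C W (zr W W) = zr uo uo"
  by (rule zero_unique[OF trace_closed[OF zero_closed]])
     (metis trace_add zero_closed zz)

lemma trace_msum:
  "set fs \<subseteq> hom W W \<Longrightarrow> ctrace C W (msum C W W fs) = msum C uo uo (map (ctrace C W) fs)"
proof (induction fs)
  case Nil then show ?case using trace_zero by (simp add: msum_def)
next
  case (Cons f fs)
  then show ?case using trace_add[OF _ msum_closed] by (simp add: msum_Cons)
qed

lemma ev_add: "ev_linear C ev \<Longrightarrow> a \<in> hom uo uo \<Longrightarrow> b \<in> hom uo uo \<Longrightarrow> ev (ad a b) = ev a + ev b"
  unfolding ev_linear_def by blast

lemma ev_smul: "ev_linear C ev \<Longrightarrow> a \<in> hom uo uo \<Longrightarrow> ev (sm c a) = c * ev a"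
  unfolding ev_linear_def by blast

lemma ev_zero: assumes "ev_linear C ev" shows "ev (zr uo uo) = 0"
proof -
  have "ev (zr uo uo) = ev (zr uo uo) + ev (zr uo uo)"
    using ev_add[OF assms zero_closed zero_closed] zz by simp
  then show ?thesis by simp
qed

lemma ev_msum:
  assumes lin: "ev_linear C ev"
  shows "set fs \<subseteq> hom uo uo \<Longrightarrow> ev (msum C uo uo fs) = sum_list (map ev fs)"
proof (induction fs)
  case Nil then show ?case using ev_zero[OF lin] by (simp add: msum_def)
next
  case (Cons f fs)
  then show ?case using ev_add[OF lin _ msum_closed] by (simp add: msum_Cons)
qed

lemma M_expand:
  assumes lin: "ev_linear C ev"
    and l: "set l \<subseteq> {(c, x, y). x \<in> hom uo X \<and> y \<in> hom uo Y}"
    and z: "z \<in> hom uo (ot X Y)"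
    and I: "mdiff C z (msum C uo (ot X Y) (map (\<lambda>(c, x, y). sm c (tn x y)) l)) \<in> I1 C ev uo (ot X Y)"
    and R: "R \<in> hom (ot X Y) uo"
  shows "ev (cp R z) = sum_list (map (\<lambda>(c, x, y). c * ev (cp R (tn x y))) l)"
proof -
  let ?F = "\<lambda>(c, x, y). sm c (tn x y)"
  let ?S = "msum C uo (ot X Y) (map ?F l)"
  have Fl: "set (map ?F l) \<subseteq> hom uo (ot X Y)"
    using l by (force intro: smul_closed mtens_closed[of _ uo X _ uo Y, simplified])
  have S: "?S \<in> hom uo (ot X Y)" using msum_closed[OF Fl] .
  have nS: "sm (-1) ?S \<in> hom uo (ot X Y)" using smul_closed[OF S] .
  have Rz: "cp R z \<in> hom uo uo" using comp_closed[OF z R] .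
  have RS: "cp R ?S \<in> hom uo uo" using comp_closed[OF S R] .
  have md: "mdiff C z ?S \<in> hom uo (ot X Y)" unfolding mdiff_def using add_closed[OF z nS] .
  have "ev (ctrace C uo (cp R (mdiff C z ?S))) = 0" using I R unfolding I1_def by blast
  then have "ev (cp R (mdiff C z ?S)) = 0" using TR0[OF comp_closed[OF md R]] by simp
  moreover have "cp R (mdiff C z ?S) = ad (cp R z) (sm (-1) (cp R ?S))"
    unfolding mdiff_def using comp_add_right[OF z nS R] comp_smul_right[OF S R] by simp
  ultimately have "ev (cp R z) + (-1) * ev (cp R ?S) = 0"
    using ev_add[OF lin Rz smul_closed[OF RS]] ev_smul[OF lin RS] by simp
  then have e1: "ev (cp R z) = ev (cp R ?S)" by simp
  have RFl: "set (map (cp R) (map ?F l)) \<subseteq> hom uo uo" using Fl R by (auto intro: comp_closed)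
  have "ev (cp R ?S) = sum_list (map ev (map (cp R) (map ?F l)))"
    using comp_msum_left[OF R Fl] ev_msum[OF lin RFl] by simp
  also have "\<dots> = sum_list (map (\<lambda>(c, x, y). c * ev (cp R (tn x y))) l)"
  proof -
    have "\<And>p. p \<in> set l \<Longrightarrow> ev (cp R (?F p)) = (\<lambda>(c, x, y). c * ev (cp R (tn x y))) p"
    proof -
      fix p assume p: "p \<in> set l"
      obtain c x y where pe: "p = (c, x, y)" by (cases p) auto
      have x: "x \<in> hom uo X" and y: "y \<in> hom uo Y" using p pe l by auto
      have xy: "tn x y \<in> hom uo (ot X Y)" using mtens_closed[OF x y] by simp
      show "ev (cp R (?F p)) = (\<lambda>(c, x, y). c * ev (cp R (tn x y))) p"
        using pe comp_smul_right[OF xy R] ev_smul[OF lin comp_closed[OF xy R]] by simp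
    qed
    then show ?thesis by (simp add: comp_def cong: map_cong)
  qed
  finally show ?thesis using e1 by simp
qed

lemma TRX:
  assumes lin: "ev_linear C ev"
    and l: "set l \<subseteq> {(c, x, y). x \<in> hom uo W \<and> y \<in> hom uo (c_dual C W)}"
    and I: "mdiff C (c_coev C W) (msum C uo (ot W (c_dual C W)) (map (\<lambda>(c, x, y). sm c (tn x y)) l))
              \<in> I1 C ev uo (ot W (c_dual C W))"
    and h: "h \<in> hom W W"
  shows "ev (ctrace C W h) = sum_list (map (\<lambda>(c, x, y). c * ev (cp (cp (c_evl C W) (tn y (idm W))) (cp h x))) l)"
proof -
  let ?D = "c_dual C W"
  let ?e = "c_evl C W" and ?c = "c_coev C W" and ?br = "c_braid C W ?D"
  let ?R = "cp ?e (cp ?br (tn h (idm ?D)))"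
  have e: "?e \<in> hom (ot ?D W) uo" by (rule evl_closed)
  have c: "?c \<in> hom uo (ot W ?D)" by (rule coev_closed)
  have br: "?br \<in> hom (ot W ?D) (ot ?D W)" by (rule braid_closed)
  have hD: "tn h (idm ?D) \<in> hom (ot W ?D) (ot W ?D)" using mtens_closed[OF h id_closed] .
  have R: "?R \<in> hom (ot W ?D) uo" using comp_closed[OF comp_closed[OF hD br] e] .
  have "ctrace C W h = cp ?e (cp ?br (cp (tn h (idm ?D)) ?c))" unfolding ctrace_def ..
  also have "\<dots> = cp ?e (cp (cp ?br (tn h (idm ?D))) ?c)" using comp_assoc[OF c hD br] by simp
  also have "\<dots> = cp ?R ?c" using comp_assoc[OF c comp_closed[OF hD br] e] .
  finally have t: "ctrace C W h = cp ?R ?c" .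
  have "ev (cp ?R ?c) = sum_list (map (\<lambda>(c, x, y). c * ev (cp ?R (tn x y))) l)"
    by (rule M_expand[OF lin l c I R])
  also have "\<dots> = sum_list (map (\<lambda>(c, x, y). c * ev (cp (cp ?e (tn y (idm W))) (cp h x))) l)"
  proof -
    have "\<And>p. p \<in> set l \<Longrightarrow> (\<lambda>(c, x, y). c * ev (cp ?R (tn x y))) p
          = (\<lambda>(c, x, y). c * ev (cp (cp ?e (tn y (idm W))) (cp h x))) p"
    proof -
      fix p assume p: "p \<in> set l"
      obtain c x y where pe: "p = (c, x, y)" by (cases p) auto
      have x: "x \<in> hom uo W" and y: "y \<in> hom uo ?D" using p pe l by auto
      show "(\<lambda>(c, x, y). c * ev (cp ?R (tn x y))) p
          = (\<lambda>(c, x, y). c * ev (cp (cp ?e (tn y (idm W))) (cp h x))) p"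
        using pe C1[OF h x y] by simp
    qed
    then show ?thesis by (metis (no_types, lifting) map_cong)
  qed
  finally show ?thesis using t by simp
qed

lemma decomp:
  assumes "U_strong C ev" and "z \<in> hom uo (ot X Y)"
  shows "\<exists>l. set l \<subseteq> {(c, x, y). x \<in> hom uo X \<and> y \<in> hom uo Y} \<and>
           mdiff C z (msum C uo (ot X Y) (map (\<lambda>(c, x, y). sm c (tn x y)) l)) \<in> I1 C ev uo (ot X Y)"
  using assms unfolding U_strong_def by blast

lemma sum_list_zero: "(\<And>p. p \<in> set l \<Longrightarrow> f p = (0::'a::comm_monoid_add)) \<Longrightarrow> sum_list (map f l) = 0"
  by (induction l) auto

lemma sum_list_map_cong: "(\<And>p. p \<in> set l \<Longrightarrow> f p = g p) \<Longrightarrow> sum_list (map f l) = sum_list (map g l)"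
  by (metis map_cong)

lemma I1_sub_I2:
  assumes S: "S \<in> I1 C ev W W'"
  shows "S \<in> I2 C ev W W'"
proof -
  have Sh: "S \<in> hom W W'" using S unfolding I1_def by simp
  have "ev (cp S'' (cp S S')) = 0" if S': "S' \<in> hom uo W" and S'': "S'' \<in> hom W' uo" for S' S''
  proof -
    have v: "cp S'' S \<in> hom W uo" using comp_closed[OF Sh S''] .
    have g: "cp S' S'' \<in> hom W' W" using comp_closed[OF S'' S'] .
    have "ev (ctrace C W (cp (cp S' S'') S)) = 0" using S g unfolding I1_def by blast
    moreover have "cp (cp S' S'') S = cp S' (cp S'' S)" using comp_assoc[OF Sh S'' S'] by simp
    moreover have "ctrace C W (cp S' (cp S'' S)) = cp (cp S'' S) S'" by (rule TR1[OF S' v])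
    moreover have "cp (cp S'' S) S' = cp S'' (cp S S')" using comp_assoc[OF S' Sh S''] by simp
    ultimately show ?thesis by simp
  qed
  then show ?thesis using Sh unfolding I2_def by blast
qed

lemma I2_sub_I1:
  assumes lin: "ev_linear C ev" and st: "U_strong C ev" and S: "S \<in> I2 C ev W W'"
  shows "S \<in> I1 C ev W W'"
proof -
  let ?D = "c_dual C W"
  have Sh: "S \<in> hom W W'" using S unfolding I2_def by simp
  obtain l where l: "set l \<subseteq> {(c, x, y). x \<in> hom uo W \<and> y \<in> hom uo ?D}"
    and I: "mdiff C (c_coev C W) (msum C uo (ot W ?D) (map (\<lambda>(c, x, y). sm c (tn x y)) l))
              \<in> I1 C ev uo (ot W ?D)"
    using decomp[OF st coev_closed] by blast
  have "ev (ctrace C W (cp g S)) = 0" if g: "g \<in> hom W' W" for g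
  proof -
    have gS: "cp g S \<in> hom W W" using comp_closed[OF Sh g] .
    have "ev (ctrace C W (cp g S)) =
      sum_list (map (\<lambda>(c, x, y). c * ev (cp (cp (c_evl C W) (tn y (idm W))) (cp (cp g S) x))) l)"
      by (rule TRX[OF lin l I gS])
    also have "\<dots> = 0"
    proof (rule sum_list_zero)
      fix p assume p: "p \<in> set l"
      obtain c x y where pe: "p = (c, x, y)" by (cases p) auto
      have x: "x \<in> hom uo W" and y: "y \<in> hom uo ?D" using p pe l by auto
      have b: "cp (c_evl C W) (tn y (idm W)) \<in> hom W uo"
        using comp_closed[OF mtens_closed[OF y id_closed[of W]] evl_closed] by simp
      have S'': "cp (cp (c_evl C W) (tn y (idm W))) g \<in> hom W' uo" using comp_closed[OF g b] .
      have "cp (cp (c_evl C W) (tn y (idm W))) (cp (cp g S) x)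
          = cp (cp (cp (c_evl C W) (tn y (idm W))) g) (cp S x)"
        using comp_assoc[OF x Sh g] comp_assoc[OF comp_closed[OF x Sh] g b] by simp
      moreover have "ev (cp (cp (cp (c_evl C W) (tn y (idm W))) g) (cp S x)) = 0"
        using S x S'' unfolding I2_def by blast
      ultimately show "(\<lambda>(c, x, y). c * ev (cp (cp (c_evl C W) (tn y (idm W))) (cp (cp g S) x))) p = 0"
        using pe by simp
    qed
    finally show ?thesis .
  qed
  then show ?thesis using Sh unfolding I1_def by blast
qed

lemma Mprime:
  assumes lin: "ev_linear C ev" and st: "U_strong C ev" and S: "S \<in> hom W W'"
  shows "\<exists>l. set l \<subseteq> {(c, a, b). a \<in> hom uo W' \<and> b \<in> hom W uo} \<and>
            mdiff C S (msum C W W' (map (\<lambda>(c, a, b). sm c (cp a b)) l)) \<in> I1 C ev W W'"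
proof -
  let ?D = "c_dual C W"
  let ?B = "\<lambda>y. cp (c_evl C W) (tn y (idm W))"
  obtain l0 where l0: "set l0 \<subseteq> {(c, x, y). x \<in> hom uo W \<and> y \<in> hom uo ?D}"
    and I: "mdiff C (c_coev C W) (msum C uo (ot W ?D) (map (\<lambda>(c, x, y). sm c (tn x y)) l0))
              \<in> I1 C ev uo (ot W ?D)"
    using decomp[OF st coev_closed] by blast
  have Bc: "?B y \<in> hom W uo" if "y \<in> hom uo ?D" for y
    using comp_closed[OF mtens_closed[OF that id_closed[of W]] evl_closed] by simp
  define l where "l = map (\<lambda>(c, x, y). (c, cp S x, ?B y)) l0"
  let ?G = "\<lambda>(c, a, b). sm c (cp a b)"
  let ?Sg = "msum C W W' (map ?G l)"
  have lset: "set l \<subseteq> {(c, a, b). a \<in> hom uo W' \<and> b \<in> hom W uo}"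
  proof
    fix p assume "p \<in> set l"
    then obtain c x y where q: "(c, x, y) \<in> set l0" and p: "p = (c, cp S x, ?B y)" unfolding l_def by auto
    have x: "x \<in> hom uo W" and y: "y \<in> hom uo ?D" using q l0 by auto
    show "p \<in> {(c, a, b). a \<in> hom uo W' \<and> b \<in> hom W uo}" using p comp_closed[OF x S] Bc[OF y] by simp
  qed
  have Gl: "set (map ?G l) \<subseteq> hom W W'"
  proof
    fix m assume "m \<in> set (map ?G l)"
    then obtain c a b where p: "(c, a, b) \<in> set l" and m: "m = sm c (cp a b)" by auto
    have a: "a \<in> hom uo W'" and b: "b \<in> hom W uo" using p lset by auto
    show "m \<in> hom W W'" using m smul_closed[OF comp_closed[OF b a]] by simp
  qed
  have Sg: "?Sg \<in> hom W W'" using msum_closed[OF Gl] .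
  have nSg: "sm (-1) ?Sg \<in> hom W W'" using smul_closed[OF Sg] .
  have md: "mdiff C S ?Sg \<in> hom W W'" unfolding mdiff_def using add_closed[OF S nSg] .
  have "ev (ctrace C W (cp g (mdiff C S ?Sg))) = 0" if g: "g \<in> hom W' W" for g
  proof -
    have gS: "cp g S \<in> hom W W" using comp_closed[OF S g] .
    have gSg: "cp g ?Sg \<in> hom W W" using comp_closed[OF Sg g] .
    have tgS: "ctrace C W (cp g S) \<in> hom uo uo" using trace_closed[OF gS] .
    have tgSg: "ctrace C W (cp g ?Sg) \<in> hom uo uo" using trace_closed[OF gSg] .
    have "cp g (mdiff C S ?Sg) = ad (cp g S) (sm (-1) (cp g ?Sg))"
      unfolding mdiff_def using comp_add_right[OF S nSg g] comp_smul_right[OF Sg g] by simp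
    then have "ctrace C W (cp g (mdiff C S ?Sg)) = ad (ctrace C W (cp g S)) (sm (-1) (ctrace C W (cp g ?Sg)))"
      using trace_add[OF gS smul_closed[OF gSg]] trace_smul[OF gSg] by simp
    then have e1: "ev (ctrace C W (cp g (mdiff C S ?Sg))) = ev (ctrace C W (cp g S)) - ev (ctrace C W (cp g ?Sg))"
      using ev_add[OF lin tgS smul_closed[OF tgSg]] ev_smul[OF lin tgSg] by simp
    have gGl: "set (map (cp g) (map ?G l)) \<subseteq> hom W W" using Gl comp_closed[OF _ g] by auto
    have tgGl: "set (map (ctrace C W) (map (cp g) (map ?G l))) \<subseteq> hom uo uo"
      using gGl by (auto intro: trace_closed)
    have "ev (ctrace C W (cp g ?Sg)) = sum_list (map ev (map (ctrace C W) (map (cp g) (map ?G l))))"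
      using comp_msum_left[OF g Gl] trace_msum[OF gGl] ev_msum[OF lin tgGl] by simp
    also have "\<dots> = sum_list (map (\<lambda>(c, x, y). c * ev (cp (?B y) (cp (cp g S) x))) l0)"
    proof -
      have elem: "\<And>p. p \<in> set l0 \<Longrightarrow> ev (ctrace C W (cp g (?G ((\<lambda>(c, x, y). (c, cp S x, ?B y)) p))))
               = (\<lambda>(c, x, y). c * ev (cp (?B y) (cp (cp g S) x))) p"
      proof -
        fix p assume p: "p \<in> set l0"
        obtain c x y where pe: "p = (c, x, y)" by (cases p) auto
        have x: "x \<in> hom uo W" and y: "y \<in> hom uo ?D" using p pe l0 by auto
        have b: "?B y \<in> hom W uo" using Bc[OF y] .
        have Sx: "cp S x \<in> hom uo W'" using comp_closed[OF x S] .
        have gSx: "cp g (cp S x) \<in> hom uo W" using comp_closed[OF Sx g] .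
        have m: "cp (cp S x) (?B y) \<in> hom W W'" using comp_closed[OF b Sx] .
        have gm: "cp g (cp (cp S x) (?B y)) \<in> hom W W" using comp_closed[OF m g] .
        have "cp g (sm c (cp (cp S x) (?B y))) = sm c (cp g (cp (cp S x) (?B y)))"
          using comp_smul_right[OF m g] .
        moreover have "cp g (cp (cp S x) (?B y)) = cp (cp g (cp S x)) (?B y)"
          using comp_assoc[OF b Sx g] .
        moreover have "ctrace C W (cp (cp g (cp S x)) (?B y)) = cp (?B y) (cp g (cp S x))"
          by (rule TR1[OF gSx b])
        moreover have "cp g (cp S x) = cp (cp g S) x" using comp_assoc[OF x S g] .
        ultimately show "ev (ctrace C W (cp g (?G ((\<lambda>(c, x, y). (c, cp S x, ?B y)) p))))
               = (\<lambda>(c, x, y). c * ev (cp (?B y) (cp (cp g S) x))) p"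
          using pe trace_smul[OF gm] ev_smul[OF lin trace_closed[OF gm]] by simp
      qed
      show ?thesis unfolding l_def map_map o_def by (rule sum_list_map_cong) (rule elem)
    qed
    also have "\<dots> = ev (ctrace C W (cp g S))" using TRX[OF lin l0 I gS] by simp
    finally show ?thesis using e1 by simp
  qed
  then have "mdiff C S ?Sg \<in> I1 C ev W W'" using md unfolding I1_def by blast
  then show ?thesis using lset by blast
qed

lemma I2_from:
  assumes lin: "ev_linear C ev" and st: "U_strong C ev" and M: "M \<in> hom (ot X Y) P"
    and H: "\<And>x y Z. x \<in> hom uo X \<Longrightarrow> y \<in> hom uo Y \<Longrightarrow> Z \<in> hom P uo \<Longrightarrow> ev (cp Z (cp M (tn x y))) = 0"
  shows "M \<in> I2 C ev (ot X Y) P"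
proof -
  have "ev (cp Z (cp M X')) = 0" if X': "X' \<in> hom uo (ot X Y)" and Z: "Z \<in> hom P uo" for X' Z
  proof -
    obtain l where l: "set l \<subseteq> {(c, x, y). x \<in> hom uo X \<and> y \<in> hom uo Y}"
      and I: "mdiff C X' (msum C uo (ot X Y) (map (\<lambda>(c, x, y). sm c (tn x y)) l)) \<in> I1 C ev uo (ot X Y)"
      using decomp[OF st X'] by blast
    have R: "cp Z M \<in> hom (ot X Y) uo" using comp_closed[OF M Z] .
    have "ev (cp Z (cp M X')) = ev (cp (cp Z M) X')" using comp_assoc[OF X' M Z] by simp
    also have "\<dots> = sum_list (map (\<lambda>(c, x, y). c * ev (cp (cp Z M) (tn x y))) l)"
      by (rule M_expand[OF lin l X' I R])
    also have "\<dots> = 0"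
    proof (rule sum_list_zero)
      fix p assume p: "p \<in> set l"
      obtain c x y where pe: "p = (c, x, y)" by (cases p) auto
      have x: "x \<in> hom uo X" and y: "y \<in> hom uo Y" using p pe l by auto
      have xy: "tn x y \<in> hom uo (ot X Y)" using mtens_closed[OF x y] by simp
      have "cp (cp Z M) (tn x y) = cp Z (cp M (tn x y))" using comp_assoc[OF xy M Z] by simp
      then show "(\<lambda>(c, x, y). c * ev (cp (cp Z M) (tn x y))) p = 0" using pe H[OF x y Z] by simp
    qed
    finally show ?thesis .
  qed
  then show ?thesis using M unfolding I2_def by blast
qed

lemma monoidal:
  assumes lin: "ev_linear C ev" and st: "U_strong C ev"
    and S: "S \<in> I1 C ev V V'" and T: "T \<in> hom W W'"
  shows "tn S T \<in> I1 C ev (ot V W) (ot V' W') \<and> tn T S \<in> I1 C ev (ot W V) (ot W' V')"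
proof
  have S2: "S \<in> I2 C ev V V'" using I1_sub_I2[OF S] .
  have Sh: "S \<in> hom V V'" using S unfolding I1_def by simp
  show "tn S T \<in> I1 C ev (ot V W) (ot V' W')"
  proof (rule I2_sub_I1[OF lin st], rule I2_from[OF lin st mtens_closed[OF Sh T]])
    fix x y Z assume x: "x \<in> hom uo V" and y: "y \<in> hom uo W" and Z: "Z \<in> hom (ot V' W') uo"
    have Sx: "cp S x \<in> hom uo V'" using comp_closed[OF x Sh] .
    have Ty: "cp T y \<in> hom uo W'" using comp_closed[OF y T] .
    have iT: "tn (idm V') (cp T y) \<in> hom V' (ot V' W')" using mtens_closed[OF id_closed Ty] by simp
    have Z2: "cp Z (tn (idm V') (cp T y)) \<in> hom V' uo" using comp_closed[OF iT Z] .
    have "cp (tn S T) (tn x y) = tn (cp S x) (cp T y)" using interchange[OF x Sh y T] by simp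
    also have "\<dots> = cp (tn (idm V') (cp T y)) (cp S x)"
      using slide2[OF Sx Ty] mtens_unit_right[OF Sx] by simp
    finally have "cp Z (cp (tn S T) (tn x y)) = cp (cp Z (tn (idm V') (cp T y))) (cp S x)"
      using comp_assoc[OF Sx iT Z] by simp
    then show "ev (cp Z (cp (tn S T) (tn x y))) = 0" using S2 x Z2 unfolding I2_def by auto
  qed
  show "tn T S \<in> I1 C ev (ot W V) (ot W' V')"
  proof (rule I2_sub_I1[OF lin st], rule I2_from[OF lin st mtens_closed[OF T Sh]])
    fix x y Z assume x: "x \<in> hom uo W" and y: "y \<in> hom uo V" and Z: "Z \<in> hom (ot W' V') uo"
    have Sy: "cp S y \<in> hom uo V'" using comp_closed[OF y Sh] .
    have Tx: "cp T x \<in> hom uo W'" using comp_closed[OF x T] .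
    have Ti: "tn (cp T x) (idm V') \<in> hom V' (ot W' V')" using mtens_closed[OF Tx id_closed] by simp
    have Z2: "cp Z (tn (cp T x) (idm V')) \<in> hom V' uo" using comp_closed[OF Ti Z] .
    have "cp (tn T S) (tn x y) = tn (cp T x) (cp S y)" using interchange[OF x T y Sh] by simp
    also have "\<dots> = cp (tn (cp T x) (idm V')) (cp S y)"
      using slide1[OF Tx Sy] mtens_unit_left[OF Sy] by simp
    finally have "cp Z (cp (tn T S) (tn x y)) = cp (cp Z (tn (cp T x) (idm V'))) (cp S y)"
      using comp_assoc[OF Sy Ti Z] by simp
    then show "ev (cp Z (cp (tn T S) (tn x y))) = 0" using S2 y Z2 unfolding I2_def by auto
  qed
qed

end

theorem mainTheorem5:
  fixes C :: "('o, 'm, 'k::comm_ring_1) lsmcat" and ev :: "'m \<Rightarrow> 'k"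
  assumes "lin_sym_mon_cat_duals C"
    and "ev_linear C ev"
    and "ev_multiplicative C ev"
    and "U_strong C ev"
  shows "(\<forall>W W'. \<forall>S \<in> c_hom C W W'. \<exists>l.
            set l \<subseteq> {(c, a, b). a \<in> c_hom C (c_unit C) W' \<and> b \<in> c_hom C W (c_unit C)} \<and>
            mdiff C S (msum C W W' (map (\<lambda>(c, a, b). c_smul C c (c_comp C a b)) l)) \<in> I1 C ev W W')
       \<and> (\<forall>W W'. I1 C ev W W' = I2 C ev W W')
       \<and> (\<forall>V V' W W' S T. S \<in> I1 C ev V V' \<longrightarrow> T \<in> c_hom C W W' \<longrightarrow>
            c_mtens C S T \<in> I1 C ev (c_otens C V W) (c_otens C V' W') \<and>
            c_mtens C T S \<in> I1 C ev (c_otens C W V) (c_otens C W' V'))"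
proof -
  interpret lin_sym_mon_cat_duals C by (rule assms(1))
  show ?thesis
    using Mprime[OF assms(2) assms(4)] I1_sub_I2 I2_sub_I1[OF assms(2) assms(4)]
      monoidal[OF assms(2) assms(4)] by blast
qed

end
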